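(* Let $\Omega\subseteq\mathbb R^n$ be open and bounded, $0<d<n$, $p=n/d$, $\frac1p+\frac1{p'}=1$, and let $K:\Omega\times\Omega\to[-\infty,\infty]$ be measurable with $K(x,y)=g\big(x,\frac{y-x}{|y-x|}\big)|x-y|^{d-n}+O(|x-y|^{d-n+\epsilon})$, where $g:\Omega\times S^{n-1}\to\mathbb R$ is bounded and measurable, $\epsilon>0$, and the $O$-term is bounded by $C''|x-y|^{d-n+\epsilon}$ uniformly in $x,y$. Let $A=\frac1n\sup_{x\in\Omega}\int_{S^{n-1}}|g(x,\omega)|^{p'}d\omega$. Then there is $\sigma>0$ such that for $s>0$ $$\sup_{x\in\Omega}\big|\{y\in\Omega:|K(x,y)|>s\}\big|\le As^{-p'}+O(s^{-p'-\sigma}),$$ with equality (i.e. $\sup_{x\in\Omega}|\{y\in\Omega:|K(x,y)|>s\}|=As^{-p'}+O(s^{-p'-\sigma})$) if the supremum defining $A$ is attained in $\Omega$. Moreover there is $C$ with $$\sup_{y\in\Omega}\big|\{x\in\Omega:|K(x,y)|>s\}\big|\le Cs^{-p'}.$$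
   Context: $|E|$ denotes Lebesgue measure; $S^{n-1}$ is the unit sphere of $\mathbb R^n$ with surface measure $d\omega$. $O(s^{-p'-\sigma})$ denotes a quantity bounded in absolute value by $C's^{-p'-\sigma}$ with $C'$ independent of $s$. *)

theory Defs
  imports "HOL-Analysis.Analysis"
begin

text \<open>Surface measure on the unit sphere of an n-dimensional Euclidean space,
  defined as the cone measure: for E contained in the sphere,
  sigma(E) = n * |{t w : 0 < t <= 1, w in E}|.  This coincides with the
  standard surface (Hausdorff) measure.\<close>
definition sphere_measure :: "'a::euclidean_space measure" where
  "sphere_measure =
     scale_measure (of_nat DIM('a))
       (distr (restrict_space lborel (ball 0 1 - {0}))
              (restrict_space borel (sphere 0 1))
              (\<lambda>x. x /\<^sub>R norm x))"

end

theory Submission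
  imports Defs "HOL-Real_Asymp.Real_Asymp"
begin



lemma norm_one_ind:
  fixes z :: "'a::euclidean_space"
  assumes "z \<noteq> 0"
  shows "(\<integral>\<^sup>+l. indicator {norm z<..} l * ennreal (real DIM('a) * norm z ^ DIM('a) / l ^ (DIM('a)+1)) \<partial>lborel) = 1"
proof -
  define N where "N = DIM('a)"
  define a where "a = norm z"
  have a: "a > 0" using assms by (simp add: a_def)
  have N: "N \<ge> 1" by (simp add: N_def DIM_positive Suc_leI)
  have "(\<integral>\<^sup>+l. ennreal (real N * a ^ N / l ^ (N+1)) * indicator {a..} l \<partial>lborel)
        = ennreal (0 - (- (a^N / a^N)))"
  proof (rule nn_integral_FTC_atLeast[where F="\<lambda>l. - (a^N / l^N)"])
    show "(\<lambda>l. real N * a ^ N / l ^ (N+1)) \<in> borel_measurable borel" by measurable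
    fix l assume l: "a \<le> l"
    then have lp: "l > 0" using a by auto
    show "0 \<le> real N * a ^ N / l ^ (N+1)" using lp a by simp
    show "((\<lambda>l. - (a^N / l^N)) has_real_derivative real N * a ^ N / l ^ (N+1)) (at l)"
      using lp N
      apply (auto intro!: derivative_eq_intros)
      apply (simp add: field_simps)
      apply (cases N, simp_all add: field_simps)
      done
  next
    show "((\<lambda>l. - (a^N / l^N)) \<longlongrightarrow> 0) at_top"
      using N by real_asymp
  qed
  also have "\<dots> = 1" using a by simp
  finally have *: "(\<integral>\<^sup>+l. ennreal (real N * a ^ N / l ^ (N+1)) * indicator {a..} l \<partial>lborel) = 1" .
  show ?thesis
    unfolding N_def[symmetric] a_def[symmetric]
    apply (subst *[symmetric])
    apply (rule nn_integral_cong_AE)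
    using AE_lborel_singleton[of a]
    by eventually_elim (auto simp: indicator_def)
qed

lemma scale_integral:
  fixes F :: "'a::euclidean_space \<Rightarrow> ennreal"
  assumes [measurable]: "F \<in> borel_measurable borel" and l: "l > 0"
  shows "(\<integral>\<^sup>+z. F z \<partial>lborel) = ennreal (l ^ DIM('a)) * (\<integral>\<^sup>+u. F (l *\<^sub>R u) \<partial>lborel)"
proof -
  have "(\<integral>\<^sup>+z. F z \<partial>lborel) = (\<integral>\<^sup>+z. F z \<partial>(density (distr lborel borel (\<lambda>x. 0 + l *\<^sub>R x)) (\<lambda>_. \<bar>l\<bar>^DIM('a))))"
    using lborel_affine[of l "0::'a"] l by simp
  also have "\<dots> = ennreal (l ^ DIM('a)) * (\<integral>\<^sup>+u. F (l *\<^sub>R u) \<partial>lborel)"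
    using l by (simp add: nn_integral_density nn_integral_distr nn_integral_cmult)
  finally show ?thesis .
qed

lemma ball_borel[measurable]: "ball (c::'a::euclidean_space) r \<in> sets borel" by simp

lemma radial_subst:
  fixes F :: "'a::euclidean_space \<Rightarrow> ennreal" and u :: 'a
  assumes [measurable]: "F \<in> borel_measurable borel" and u: "u \<noteq> 0"
  shows "(\<integral>\<^sup>+l. indicator {0<..} l * ennreal (l^k) * F (l *\<^sub>R u) \<partial>lborel)
     = ennreal (1 / norm u ^ (k+1)) * (\<integral>\<^sup>+r. indicator {0<..} r * ennreal (r^k) * F (r *\<^sub>R sgn u) \<partial>lborel)"
proof -
  have nu: "norm u > 0" using u by simp
  have "(\<integral>\<^sup>+l. indicator {0<..} l * ennreal (l^k) * F (l *\<^sub>R u) \<partial>lborel)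
     = ennreal \<bar>1 / norm u\<bar> * (\<integral>\<^sup>+r. indicator {0<..} (0 + (1/norm u) * r) * ennreal ((0 + (1/norm u) * r)^k) * F ((0 + (1/norm u) * r) *\<^sub>R u) \<partial>lborel)"
    by (rule nn_integral_real_affine) (use nu in auto)
  also have "\<dots> = ennreal (1 / norm u) * (\<integral>\<^sup>+r. ennreal (1 / norm u ^ k) * (indicator {0<..} r * ennreal (r^k) * F (r *\<^sub>R sgn u)) \<partial>lborel)"
  proof -
    have "indicator {0<..} (0 + (1/norm u) * r) * ennreal ((0 + (1/norm u) * r)^k) * F ((0 + (1/norm u) * r) *\<^sub>R u)
        = ennreal (1 / norm u ^ k) * (indicator {0<..} r * ennreal (r^k) * F (r *\<^sub>R sgn u))" for r
    proof (cases "r > 0")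
      case True
      have "ennreal ((1/norm u * r)^k) = ennreal (1 / norm u ^ k) * ennreal (r^k)"
        using True nu by (simp add: ennreal_mult[symmetric] power_mult_distrib power_divide)
      moreover have "(1/norm u * r) *\<^sub>R u = r *\<^sub>R sgn u" by (simp add: sgn_div_norm divide_inverse)
      ultimately show ?thesis using True nu by (simp add: indicator_def mult_ac)
    next
      case False
      then have "\<not> 0 < r / norm u" using nu by (simp add: zero_less_divide_iff)
      then show ?thesis using nu False by (simp add: indicator_def)
    qed
    then show ?thesis using nu by simp
  qed
  also have "\<dots> = ennreal (1 / norm u) * ennreal (1 / norm u ^ k) * (\<integral>\<^sup>+r. indicator {0<..} r * ennreal (r^k) * F (r *\<^sub>R sgn u) \<partial>lborel)"
    by (subst nn_integral_cmult) (auto simp: mult_ac)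
  also have "ennreal (1 / norm u) * ennreal (1 / norm u ^ k) = ennreal (1 / norm u ^ (k+1))"
    using nu by (simp add: ennreal_mult[symmetric])
  finally show ?thesis .
qed

lemma polar:
  fixes F :: "'a::euclidean_space \<Rightarrow> ennreal"
  assumes [measurable]: "F \<in> borel_measurable borel"
  shows "(\<integral>\<^sup>+z. F z \<partial>lborel) = ennreal (real DIM('a)) *
     (\<integral>\<^sup>+u. indicator (ball 0 1) u * (\<integral>\<^sup>+r. indicator {0<..} r * ennreal (r ^ (DIM('a) - 1)) * F (r *\<^sub>R sgn u) \<partial>lborel) \<partial>lborel)"
proof -
  define N where "N = DIM('a)"
  have N: "N \<ge> 1" by (simp add: N_def DIM_positive Suc_leI)
  define w where "w l z = (if norm z < l then ennreal (real N * norm z ^ N / l ^ (N+1)) else 0)" for l :: real and z :: 'a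
  have wm[measurable]: "(\<lambda>(z,l). w l z) \<in> borel_measurable (lborel \<Otimes>\<^sub>M lborel)"
    unfolding w_def
    by (subst measurable_cong_sets[OF sets_pair_measure_cong[OF sets_lborel sets_lborel] refl]) measurable
  have w1: "(\<integral>\<^sup>+l. w l z \<partial>lborel) = 1" if "z \<noteq> 0" for z
  proof -
    have "(\<integral>\<^sup>+l. w l z \<partial>lborel) = (\<integral>\<^sup>+l. indicator {norm z<..} l * ennreal (real DIM('a) * norm z ^ DIM('a) / l ^ (DIM('a)+1)) \<partial>lborel)"
      by (rule nn_integral_cong) (simp add: w_def N_def indicator_def)
    then show ?thesis using norm_one_ind[OF that] by simp
  qed
  have "(\<integral>\<^sup>+z. F z \<partial>lborel) = (\<integral>\<^sup>+z. F z * (\<integral>\<^sup>+l. w l z \<partial>lborel) \<partial>lborel)"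
    apply (rule nn_integral_cong_AE)
    using AE_lborel_singleton[of "0::'a"]
    by eventually_elim (simp add: w1)
  also have "\<dots> = (\<integral>\<^sup>+z. (\<integral>\<^sup>+l. F z * w l z \<partial>lborel) \<partial>lborel)"
    by (rule nn_integral_cong, rule nn_integral_cmult[symmetric]) (simp add: w_def)
  also have "\<dots> = (\<integral>\<^sup>+l. (\<integral>\<^sup>+z. F z * w l z \<partial>lborel) \<partial>lborel)"
    by (rule lborel_pair.Fubini'[symmetric]) (simp add: w_def case_prod_unfold)
  also have "\<dots> = (\<integral>\<^sup>+l. (\<integral>\<^sup>+u. indicator {0<..} l * indicator (ball 0 1) u * ennreal (real N * norm u ^ N) * ennreal (l^(N-1)) * F (l *\<^sub>R u) \<partial>lborel) \<partial>lborel)"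
  proof (rule nn_integral_cong)
    fix l :: real
    show "(\<integral>\<^sup>+z. F z * w l z \<partial>lborel) = (\<integral>\<^sup>+u. indicator {0<..} l * indicator (ball 0 1) u * ennreal (real N * norm u ^ N) * ennreal (l^(N-1)) * F (l *\<^sub>R u) \<partial>lborel)"
    proof (cases "l > 0")
      case True
      have [measurable]: "(\<lambda>z. F z * w l z) \<in> borel_measurable borel" unfolding w_def by measurable
      have "(\<integral>\<^sup>+z. F z * w l z \<partial>lborel) = ennreal (l ^ N) * (\<integral>\<^sup>+u. F (l *\<^sub>R u) * w l (l *\<^sub>R u) \<partial>lborel)"
        unfolding N_def by (rule scale_integral) (use True in auto)
      also have "\<dots> = (\<integral>\<^sup>+u. ennreal (l ^ N) * (F (l *\<^sub>R u) * w l (l *\<^sub>R u)) \<partial>lborel)"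
        by (rule nn_integral_cmult[symmetric]) measurable
      also have "\<dots> = (\<integral>\<^sup>+u. indicator {0<..} l * indicator (ball 0 1) u * ennreal (real N * norm u ^ N) * ennreal (l^(N-1)) * F (l *\<^sub>R u) \<partial>lborel)"
      proof (rule nn_integral_cong)
        fix u :: 'a
        obtain m where m: "N = Suc m" using N by (cases N) auto
        have e: "l ^ N * (real N * (l * norm u) ^ N / l ^ (N + 1)) = real N * norm u ^ N * l ^ (N - 1)"
          using True unfolding m by (simp add: field_simps)
        show "ennreal (l ^ N) * (F (l *\<^sub>R u) * w l (l *\<^sub>R u)) = indicator {0<..} l * indicator (ball 0 1) u * ennreal (real N * norm u ^ N) * ennreal (l^(N-1)) * F (l *\<^sub>R u)"
        proof (cases "norm u < 1")
          case u: True
          have "ennreal (l ^ N) * (F (l *\<^sub>R u) * w l (l *\<^sub>R u))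
             = F (l *\<^sub>R u) * (ennreal (l ^ N) * ennreal (real N * (l * norm u) ^ N / l ^ (N + 1)))"
            using True u by (simp add: w_def mult_ac)
          also have "\<dots> = F (l *\<^sub>R u) * ennreal (l ^ N * (real N * (l * norm u) ^ N / l ^ (N + 1)))"
            using True by (subst ennreal_mult) auto
          also have "\<dots> = F (l *\<^sub>R u) * (ennreal (real N * norm u ^ N) * ennreal (l ^ (N - 1)))"
            unfolding e using True by (subst ennreal_mult) auto
          finally show ?thesis using True u by (simp add: indicator_def mult_ac)
        next
          case False
          then show ?thesis using \<open>l > 0\<close> by (simp add: w_def indicator_def)
        qed
      qed
      finally show ?thesis .
    next
      case False
      have nz: "\<not> norm (z::'a) < l" for z using False norm_ge_zero[of z] by linarith
      have "\<And>z::'a. w l z = 0" unfolding w_def using nz by simp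
      moreover note nz
      ultimately show ?thesis using False by (simp add: indicator_def)
    qed
  qed
  also have "\<dots> = (\<integral>\<^sup>+u. (\<integral>\<^sup>+l. indicator {0<..} l * indicator (ball 0 1) u * ennreal (real N * norm u ^ N) * ennreal (l^(N-1)) * F (l *\<^sub>R u) \<partial>lborel) \<partial>lborel)"
    apply (rule lborel_pair.Fubini')
    apply (subst measurable_cong_sets[OF sets_pair_measure_cong[OF sets_lborel sets_lborel] refl])
    by measurable
  also have "\<dots> = (\<integral>\<^sup>+u. indicator (ball 0 1) u * ennreal (real N * norm u ^ N) * (\<integral>\<^sup>+l. indicator {0<..} l * ennreal (l^(N-1)) * F (l *\<^sub>R u) \<partial>lborel) \<partial>lborel)"
    apply (rule nn_integral_cong)
    apply (subst nn_integral_cmult[symmetric])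
     apply measurable
    by (rule nn_integral_cong) (simp add: mult_ac)
  also have "\<dots> = (\<integral>\<^sup>+u. ennreal (real N) * (indicator (ball 0 1) u * (\<integral>\<^sup>+r. indicator {0<..} r * ennreal (r ^ (N - 1)) * F (r *\<^sub>R sgn u) \<partial>lborel)) \<partial>lborel)"
    apply (rule nn_integral_cong_AE)
    using AE_lborel_singleton[of "0::'a"]
  proof eventually_elim
    case (elim u)
    have nu: "norm u > 0" using elim by simp
    have k: "N - 1 + 1 = N" using N by simp
    have "ennreal (real N * norm u ^ N) * ennreal (1 / norm u ^ N) = ennreal (real N)"
      using nu by (simp add: ennreal_mult[symmetric])
    define J where "J = (\<integral>\<^sup>+r. indicator {0<..} r * ennreal (r ^ (N - 1)) * F (r *\<^sub>R sgn u) \<partial>lborel)"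
    define I where "I = (\<integral>\<^sup>+l. indicator {0<..} l * ennreal (l^(N-1)) * F (l *\<^sub>R u) \<partial>lborel)"
    have IJ: "I = ennreal (1 / norm u ^ N) * J"
      using radial_subst[of F u "N-1", OF _ elim] unfolding k I_def J_def by simp
    have cc: "ennreal (real N * norm u ^ N) * ennreal (1 / norm u ^ N) = ennreal (real N)"
      using nu by (simp add: ennreal_mult[symmetric])
    have "indicator (ball 0 1) u * ennreal (real N * norm u ^ N) * I = ennreal (real N) * (indicator (ball 0 1) u * J)"
      unfolding IJ cc[symmetric] by (simp add: mult_ac)
    then show ?case unfolding I_def J_def .
  qed
  also have "\<dots> = ennreal (real N) * (\<integral>\<^sup>+u. indicator (ball 0 1) u * (\<integral>\<^sup>+r. indicator {0<..} r * ennreal (r ^ (N - 1)) * F (r *\<^sub>R sgn u) \<partial>lborel) \<partial>lborel)"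
  proof (rule nn_integral_cmult)
    have [measurable]: "(\<lambda>x. \<integral>\<^sup>+ r. indicator {0<..} r * ennreal (r ^ (N - 1)) * F (r *\<^sub>R sgn x) \<partial>lborel) \<in> borel_measurable borel"
      apply (rule lborel.borel_measurable_nn_integral)
      apply (subst measurable_cong_sets[OF sets_pair_measure_cong[OF refl sets_lborel] refl])
      by measurable
    show "(\<lambda>x. indicator (ball 0 1) x * \<integral>\<^sup>+ r. indicator {0<..} r * ennreal (r ^ (N - 1)) * F (r *\<^sub>R sgn x) \<partial>lborel) \<in> borel_measurable lborel"
      by measurable
  qed
  finally show ?thesis unfolding N_def .
qed

lemma translate_integral:
  fixes F :: "'a::euclidean_space \<Rightarrow> ennreal"
  assumes [measurable]: "F \<in> borel_measurable borel"
  shows "(\<integral>\<^sup>+z. F z \<partial>lborel) = (\<integral>\<^sup>+z. F (c + z) \<partial>lborel)"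
proof -
  have "(\<integral>\<^sup>+z. F z \<partial>lborel) = (\<integral>\<^sup>+z. F z \<partial>(density (distr lborel borel (\<lambda>x. c + 1 *\<^sub>R x)) (\<lambda>_. \<bar>1::real\<bar>^DIM('a))))"
    by (rule arg_cong[where f="\<lambda>M. \<integral>\<^sup>+z. F z \<partial>M"]) (rule lborel_affine, simp)
  also have "\<dots> = (\<integral>\<^sup>+z. F (c + z) \<partial>lborel)"
    by (simp add: nn_integral_density nn_integral_distr)
  finally show ?thesis .
qed

lemma radial_power:
  fixes R :: real and N :: nat
  assumes R: "R \<ge> 0" and N: "N \<ge> 1"
  shows "(\<integral>\<^sup>+r. indicator {0<..} r * ennreal (r ^ (N - 1)) * indicator {..<R} r \<partial>lborel) = ennreal (R ^ N / real N)"
proof -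
  have "(\<integral>\<^sup>+r. ennreal (r ^ (N - 1)) * indicator {0..R} r \<partial>lborel) = ennreal (R ^ N / real N - 0 ^ N / real N)"
  proof (rule nn_integral_FTC_Icc)
    show "(\<lambda>r::real. r ^ (N - 1)) \<in> borel_measurable borel" by measurable
    fix x :: real assume x: "x \<in> {0..R}"
    show "((\<lambda>r. r ^ N / real N) has_real_derivative x ^ (N - 1)) (at x)"
      using N by (auto intro!: derivative_eq_intros)
    show "0 \<le> x ^ (N - 1)" using x by simp
  qed (use R in auto)
  also have "\<dots> = ennreal (R ^ N / real N)" using N by (simp add: zero_power)
  finally have *: "(\<integral>\<^sup>+r. ennreal (r ^ (N - 1)) * indicator {0..R} r \<partial>lborel) = ennreal (R ^ N / real N)" .
  show ?thesis
    unfolding *[symmetric]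
    apply (rule nn_integral_cong_AE)
    using AE_lborel_singleton[of "0::real"] AE_lborel_singleton[of R]
    by eventually_elim (auto simp: indicator_def)
qed

lemma star_measure:
  fixes \<rho> :: "'a::euclidean_space \<Rightarrow> real" and c :: 'a
  assumes [measurable]: "\<rho> \<in> borel_measurable borel" and \<rho>: "\<And>w. \<rho> w \<ge> 0"
  shows "{y. y \<noteq> c \<and> norm (y - c) < \<rho> (sgn (y - c))} \<in> sets borel"
    and "emeasure lborel {y. y \<noteq> c \<and> norm (y - c) < \<rho> (sgn (y - c))}
       = (\<integral>\<^sup>+u. indicator (ball 0 1) u * ennreal (\<rho> (sgn u) ^ DIM('a)) \<partial>lborel)"
proof -
  define N where "N = DIM('a)"
  have N: "N \<ge> 1" by (simp add: N_def DIM_positive Suc_leI)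
  define S where "S = {y. y \<noteq> c \<and> norm (y - c) < \<rho> (sgn (y - c))}"
  show Sm: "{y. y \<noteq> c \<and> norm (y - c) < \<rho> (sgn (y - c))} \<in> sets borel" by measurable
  then have [measurable]: "S \<in> sets borel" unfolding S_def .
  have "emeasure lborel S = (\<integral>\<^sup>+y. indicator S y \<partial>lborel)" by simp
  also have "\<dots> = (\<integral>\<^sup>+z. indicator S (c + z) \<partial>lborel)"
    by (rule translate_integral) measurable
  also have "\<dots> = ennreal (real N) * (\<integral>\<^sup>+u. indicator (ball 0 1) u * (\<integral>\<^sup>+r. indicator {0<..} r * ennreal (r ^ (N - 1)) * indicator S (c + r *\<^sub>R sgn u) \<partial>lborel) \<partial>lborel)"
    unfolding N_def by (rule polar) measurable
  also have "\<dots> = ennreal (real N) * (\<integral>\<^sup>+u. indicator (ball 0 1) u * ennreal (\<rho> (sgn u) ^ N / real N) \<partial>lborel)"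
  proof -
    have "AE u in lborel. indicator (ball 0 1) u * (\<integral>\<^sup>+r. indicator {0<..} r * ennreal (r ^ (N - 1)) * indicator S (c + r *\<^sub>R sgn u) \<partial>lborel)
        = indicator (ball 0 1) u * ennreal (\<rho> (sgn u) ^ N / real N)"
      using AE_lborel_singleton[of "0::'a"]
    proof eventually_elim
      case (elim u)
      have "(\<integral>\<^sup>+r. indicator {0<..} r * ennreal (r ^ (N - 1)) * indicator S (c + r *\<^sub>R sgn u) \<partial>lborel)
          = (\<integral>\<^sup>+r. indicator {0<..} r * ennreal (r ^ (N - 1)) * indicator {..<\<rho> (sgn u)} r \<partial>lborel)"
      proof (rule nn_integral_cong)
        fix r :: real
        show "indicator {0<..} r * ennreal (r ^ (N - 1)) * indicator S (c + r *\<^sub>R sgn u)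
            = indicator {0<..} r * ennreal (r ^ (N - 1)) * indicator {..<\<rho> (sgn u)} r"
        proof (cases "r > 0")
          case True
          have ss: "sgn (sgn u) = sgn u"
            by (simp only: sgn_div_norm[of "sgn u"]) (simp add: norm_sgn elim)
          have "sgn (r *\<^sub>R sgn u) = sgn u" using True elim by (simp add: sgn_scaleR ss)
          moreover have "norm (r *\<^sub>R sgn u) = r" using True elim by (simp add: norm_sgn)
          moreover have "r *\<^sub>R sgn u \<noteq> 0" using True elim by (simp add: sgn_zero_iff)
          ultimately show ?thesis by (simp add: S_def indicator_def)
        qed (simp add: indicator_def)
      qed
      also have "\<dots> = ennreal (\<rho> (sgn u) ^ N / real N)"
        by (rule radial_power[OF \<rho> N])
      finally show ?case by simp
    qed
    then show ?thesis by (simp add: nn_integral_cong_AE)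
  qed
  also have "\<dots> = (\<integral>\<^sup>+u. ennreal (real N) * (indicator (ball 0 1) u * ennreal (\<rho> (sgn u) ^ N / real N)) \<partial>lborel)"
    by (rule nn_integral_cmult[symmetric]) measurable
  also have "\<dots> = (\<integral>\<^sup>+u. indicator (ball 0 1) u * ennreal (\<rho> (sgn u) ^ N) \<partial>lborel)"
  proof (rule nn_integral_cong)
    fix u :: 'a
    have "ennreal (real N) * ennreal (\<rho> (sgn u) ^ N / real N) = ennreal (\<rho> (sgn u) ^ N)"
      using N \<rho>[of "sgn u"] by (simp add: ennreal_mult[symmetric])
    then show "ennreal (real N) * (indicator (ball 0 1) u * ennreal (\<rho> (sgn u) ^ N / real N)) = indicator (ball 0 1) u * ennreal (\<rho> (sgn u) ^ N)"
      by (simp add: mult_ac indicator_def)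
  qed
  finally show "emeasure lborel {y. y \<noteq> c \<and> norm (y - c) < \<rho> (sgn (y - c))}
       = (\<integral>\<^sup>+u. indicator (ball 0 1) u * ennreal (\<rho> (sgn u) ^ DIM('a)) \<partial>lborel)"
    unfolding S_def N_def .
qed

lemma sphere_integral:
  fixes h :: "'a::euclidean_space \<Rightarrow> ennreal"
  assumes [measurable]: "h \<in> borel_measurable borel"
  shows "(\<integral>\<^sup>+\<omega>. h \<omega> \<partial>(sphere_measure :: 'a measure)) = ennreal (real DIM('a)) * (\<integral>\<^sup>+u. indicator (ball 0 1) u * h (sgn u) \<partial>lborel)"
proof -
  have T: "(\<lambda>x::'a. x /\<^sub>R norm x) \<in> restrict_space lborel (ball 0 1 - {0}) \<rightarrow>\<^sub>M restrict_space borel (sphere 0 1)"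
  proof (rule measurable_restrict_space2)
    show "(\<lambda>x::'a. x /\<^sub>R norm x) \<in> space (restrict_space lborel (ball 0 1 - {0})) \<rightarrow> sphere 0 1"
      by auto
    show "(\<lambda>x::'a. x /\<^sub>R norm x) \<in> restrict_space lborel (ball 0 1 - {0}) \<rightarrow>\<^sub>M borel"
      by (rule measurable_restrict_space1) simp
  qed
  have hm: "h \<in> borel_measurable (restrict_space borel (sphere 0 1))"
    by (rule measurable_restrict_space1) simp
  have "(\<integral>\<^sup>+\<omega>. h \<omega> \<partial>(sphere_measure :: 'a measure))
      = of_nat DIM('a) * (\<integral>\<^sup>+\<omega>. h \<omega> \<partial>(distr (restrict_space lborel (ball 0 1 - {0})) (restrict_space borel (sphere 0 1)) (\<lambda>x::'a. x /\<^sub>R norm x)))"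
    unfolding sphere_measure_def
    by (rule nn_integral_scale_measure) (simp add: hm)
  also have "(\<integral>\<^sup>+\<omega>. h \<omega> \<partial>(distr (restrict_space lborel (ball 0 1 - {0})) (restrict_space borel (sphere 0 1)) (\<lambda>x::'a. x /\<^sub>R norm x)))
      = (\<integral>\<^sup>+x. h (x /\<^sub>R norm x) \<partial>restrict_space lborel (ball 0 1 - {0}))"
    by (rule nn_integral_distr[OF T]) (simp add: hm)
  also have "\<dots> = (\<integral>\<^sup>+x. h (x /\<^sub>R norm x) * indicator (ball 0 1 - {0}) x \<partial>lborel)"
    by (rule nn_integral_restrict_space) simp
  also have "\<dots> = (\<integral>\<^sup>+u. indicator (ball 0 1) u * h (sgn u) \<partial>lborel)"
    apply (rule nn_integral_cong_AE)
    using AE_lborel_singleton[of "0::'a"]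
    by eventually_elim (simp add: sgn_div_norm indicator_def)
  finally show ?thesis by (simp add: ennreal_of_nat_eq_real_of_nat)
qed


lemma powr_incr_bound:
  fixes a B \<delta> P :: real
  assumes a: "0 \<le> a" "a \<le> B" and d: "0 \<le> \<delta>" "\<delta> \<le> 1" and P: "P \<ge> 1"
  shows "(a + \<delta>) powr P \<le> a powr P + P * (B + 1) powr (P - 1) * \<delta>"
proof (cases "\<delta> = 0")
  case True then show ?thesis by simp
next
  case False
  then have dp: "\<delta> > 0" using d by simp
  have cont: "continuous_on {a..a+\<delta>} (\<lambda>t. t powr P)"
    using P a by (intro continuous_on_powr' continuous_intros) auto
  have dif: "(\<lambda>t. t powr P) differentiable (at x)" if "a < x" "x < a + \<delta>" for x
  proof -
    have "x > 0" using that a by simp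
    then have "((\<lambda>t. t powr P) has_real_derivative P * x powr (P - 1)) (at x)"
      by (auto intro!: derivative_eq_intros simp: powr_diff)
    then show ?thesis by (auto simp: real_differentiable_def)
  qed
  obtain l z where z: "a < z" "z < a + \<delta>" and D: "DERIV (\<lambda>t. t powr P) z :> l"
    and eq: "(a+\<delta>) powr P - a powr P = (a + \<delta> - a) * l"
    using MVT[OF _ cont dif] dp by auto
  have zp: "z > 0" using z a by simp
  have "DERIV (\<lambda>t. t powr P) z :> P * z powr (P - 1)"
    using zp by (auto intro!: derivative_eq_intros simp: powr_diff)
  then have l: "l = P * z powr (P - 1)" using D DERIV_unique by blast
  have "z powr (P - 1) \<le> (B + 1) powr (P - 1)"
    using zp z a d P by (intro powr_mono2) auto
  then have "l \<le> P * (B + 1) powr (P - 1)" unfolding l using P by simp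
  then have "\<delta> * l \<le> \<delta> * (P * (B + 1) powr (P - 1))" using dp by (simp add: mult_left_mono)
  then show ?thesis using eq by (simp add: mult_ac)
qed


lemma lt_root_of_powr:
  fixes r X q :: real
  assumes "r > 0" "q > 0" "r powr q < X"
  shows "r < X powr (1/q)"
proof -
  have "r = (r powr q) powr (1/q)" using assms by (simp add: powr_powr)
  also have "\<dots> < X powr (1/q)" using assms by (intro powr_less_mono2) auto
  finally show ?thesis .
qed

lemma powr_of_lt_root:
  fixes r X q :: real
  assumes "r > 0" "q > 0" "X \<ge> 0" "r < X powr (1/q)"
  shows "r powr q < X"
proof -
  have "r powr q < (X powr (1/q)) powr q" using assms by (intro powr_less_mono2) auto
  also have "\<dots> = X" using assms by (simp add: powr_powr)
  finally show ?thesis .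
qed

lemma up_core:
  fixes q \<epsilon> r D G B C s v :: real
  assumes q: "q > 0" and e: "\<epsilon> > 0" and r: "0 < r" "r \<le> D" and G: "0 \<le> G" "G \<le> B"
    and C: "0 \<le> C" and s: "s \<ge> 1" and sM: "s powr (1/2) \<ge> B + C * D powr \<epsilon>"
    and v: "\<bar>v\<bar> \<le> G * r powr (-q) + C * r powr (-q + \<epsilon>)" and vs: "\<bar>v\<bar> > s"
  shows "r < ((G + C * s powr (- (\<epsilon> / (2*q)))) / s) powr (1/q)"
proof -
  have split: "G * r powr (-q) + C * r powr (-q + \<epsilon>) = r powr (-q) * (G + C * r powr \<epsilon>)"
  proof -
    have "r powr (-q + \<epsilon>) = r powr (-q) * r powr \<epsilon>" by (rule powr_add)
    then show ?thesis by (simp add: algebra_simps)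
  qed
  have rq: "r powr (-q) * r powr q = 1" using r by (simp add: powr_add[symmetric])
  show ?thesis
  proof (cases "r < s powr (- (1/(2*q)))")
    case True
    have "r powr \<epsilon> \<le> (s powr (- (1/(2*q)))) powr \<epsilon>"
      using True r e by (intro powr_mono2) auto
    also have "\<dots> = s powr (- (\<epsilon> / (2*q)))" using s by (simp add: powr_powr)
    finally have re: "r powr \<epsilon> \<le> s powr (- (\<epsilon> / (2*q)))" .
    have "s < r powr (-q) * (G + C * s powr (- (\<epsilon> / (2*q))))"
    proof -
      have "G + C * r powr \<epsilon> \<le> G + C * s powr (- (\<epsilon> / (2*q)))"
        using re C by (simp add: mult_left_mono)
      then have "r powr (-q) * (G + C * r powr \<epsilon>) \<le> r powr (-q) * (G + C * s powr (- (\<epsilon> / (2*q))))"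
        by (simp add: mult_left_mono)
      then show ?thesis using v vs split by linarith
    qed
    then have "s * r powr q < (r powr (-q) * (G + C * s powr (- (\<epsilon> / (2*q))))) * r powr q"
      using r by (intro mult_strict_right_mono) auto
    also have "\<dots> = (r powr (-q) * r powr q) * (G + C * s powr (- (\<epsilon> / (2*q))))" by (simp only: mult_ac)
    finally have "s * r powr q < (G + C * s powr (- (\<epsilon> / (2*q))))" unfolding rq by simp
    then have "r powr q < (G + C * s powr (- (\<epsilon> / (2*q)))) / s"
      using s by (simp add: field_simps)
    then show ?thesis by (rule lt_root_of_powr[OF r(1) q])
  next
    case False
    then have r1: "s powr (- (1/(2*q))) \<le> r" by simp
    have "r powr (-q) \<le> (s powr (- (1/(2*q)))) powr (-q)"
      using r1 q s by (intro powr_mono2') auto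
    also have "\<dots> = s powr (1/2)" using s q by (simp add: powr_powr)
    finally have rq2: "r powr (-q) \<le> s powr (1/2)" .
    have "r powr \<epsilon> \<le> D powr \<epsilon>" using r e by (intro powr_mono2) auto
    then have "G + C * r powr \<epsilon> \<le> B + C * D powr \<epsilon>" using G C by (simp add: add_mono mult_left_mono)
    then have "r powr (-q) * (G + C * r powr \<epsilon>) \<le> s powr (1/2) * (B + C * D powr \<epsilon>)"
      using rq2 G C by (intro mult_mono) auto
    also have "\<dots> \<le> s powr (1/2) * s powr (1/2)" using sM by (simp add: mult_left_mono)
    also have "\<dots> = s" using s by (simp add: powr_add[symmetric])
    finally show ?thesis using v vs split by linarith
  qed
qed

lemma low_core:
  fixes q \<epsilon> r G B C s :: real
  assumes q: "q > 0" and e: "\<epsilon> > 0" and r: "0 < r" and G: "0 \<le> G" "G \<le> B"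
    and C: "0 \<le> C" and s: "s \<ge> 1" and sB: "B \<le> s powr (1/2)"
    and rl: "r < (max (G - C * s powr (- (\<epsilon> / (2*q)))) 0 / s) powr (1/q)"
  shows "r < s powr (- (1/(2*q)))" and "G * r powr (-q) - C * r powr (-q + \<epsilon>) > s"
proof -
  define m where "m = max (G - C * s powr (- (\<epsilon> / (2*q)))) 0"
  have m0: "m \<ge> 0" by (simp add: m_def)
  have rqm: "r powr q < m / s"
    using powr_of_lt_root[OF r q _ rl[folded m_def]] m0 s by simp
  have mpos: "m > 0"
  proof -
    have "0 < r powr q" using r by simp
    then have "0 < m / s" using rqm by linarith
    then show ?thesis using s by (simp add: zero_less_divide_iff)
  qed
  then have mG: "m = G - C * s powr (- (\<epsilon> / (2*q)))" unfolding m_def by (simp add: max_def split: if_splits)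
  have "0 \<le> C * s powr (- (\<epsilon> / (2*q)))" using C by simp
  then have "m \<le> B" using mG G by linarith
  then have "m / s \<le> s powr (1/2) / s" using sB s by (simp add: divide_right_mono)
  also have "\<dots> = s powr (- (1/2))" using s by (simp add: powr_minus_divide powr_add[symmetric] field_simps powr_diff)
  finally have "r powr q < s powr (- (1/2))" using rqm by linarith
  then have "r < (s powr (- (1/2))) powr (1/q)" by (rule lt_root_of_powr[OF r q])
  also have "\<dots> = s powr (- (1/(2*q)))" using s by (simp add: powr_powr)
  finally show rs: "r < s powr (- (1/(2*q)))" .
  have "r powr \<epsilon> \<le> (s powr (- (1/(2*q)))) powr \<epsilon>"
    using rs r e by (intro powr_mono2) auto
  also have "\<dots> = s powr (- (\<epsilon> / (2*q)))" using s by (simp add: powr_powr)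
  finally have re: "r powr \<epsilon> \<le> s powr (- (\<epsilon> / (2*q)))" .
  have split: "G * r powr (-q) - C * r powr (-q + \<epsilon>) = r powr (-q) * (G - C * r powr \<epsilon>)"
  proof -
    have "r powr (-q + \<epsilon>) = r powr (-q) * r powr \<epsilon>" by (rule powr_add)
    then show ?thesis by (simp add: algebra_simps)
  qed
  have "m \<le> G - C * r powr \<epsilon>" using mG re C by (simp add: mult_left_mono)
  then have "r powr (-q) * m \<le> r powr (-q) * (G - C * r powr \<epsilon>)" by (simp add: mult_left_mono)
  moreover have "s < r powr (-q) * m"
  proof -
    have "s * r powr q < m" using rqm s by (simp add: field_simps)
    then have "(s * r powr q) * r powr (-q) < m * r powr (-q)"
      using r by (intro mult_strict_right_mono) auto
    moreover have "(s * r powr q) * r powr (-q) = s * (r powr q * r powr (-q))" by (simp only: mult_ac)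
    moreover have "r powr q * r powr (-q) = 1" using r by (simp add: powr_add[symmetric])
    ultimately show ?thesis by (simp add: mult_ac)
  qed
  ultimately show "G * r powr (-q) - C * r powr (-q + \<epsilon>) > s" unfolding split by linarith
qed

lemma bound_core:
  fixes q \<epsilon> r D B C s v :: real
  assumes q: "q > 0" and e: "\<epsilon> > 0" and r: "0 < r" "r \<le> D" and B: "0 \<le> B"
    and C: "0 \<le> C" and s: "s > 0"
    and v: "\<bar>v\<bar> \<le> B * r powr (-q) + C * r powr (-q + \<epsilon>)" and vs: "\<bar>v\<bar> > s"
  shows "r < ((B + C * D powr \<epsilon>) / s) powr (1/q)"
proof -
  have split: "B * r powr (-q) + C * r powr (-q + \<epsilon>) = r powr (-q) * (B + C * r powr \<epsilon>)"
  proof -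
    have "r powr (-q + \<epsilon>) = r powr (-q) * r powr \<epsilon>" by (rule powr_add)
    then show ?thesis by (simp add: algebra_simps)
  qed
  have "r powr \<epsilon> \<le> D powr \<epsilon>" using r e by (intro powr_mono2) auto
  then have "B + C * r powr \<epsilon> \<le> B + C * D powr \<epsilon>" using C by (simp add: mult_left_mono)
  then have "r powr (-q) * (B + C * r powr \<epsilon>) \<le> r powr (-q) * (B + C * D powr \<epsilon>)"
    by (simp add: mult_left_mono)
  then have "s < r powr (-q) * (B + C * D powr \<epsilon>)" using v vs split by linarith
  then have "s * r powr q < (r powr (-q) * (B + C * D powr \<epsilon>)) * r powr q"
    using r by (intro mult_strict_right_mono) auto
  also have "\<dots> = (r powr (-q) * r powr q) * (B + C * D powr \<epsilon>)" by (simp only: mult_ac)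
  also have "r powr (-q) * r powr q = 1" using r by (simp add: powr_add[symmetric])
  finally have "r powr q < (B + C * D powr \<epsilon>) / s" using s by (simp add: field_simps)
  then show ?thesis by (rule lt_root_of_powr[OF r(1) q])
qed


lemma ev_thresh:
  fixes \<sigma> C M \<eta> a :: real
  assumes "\<sigma> > 0" "\<eta> > 0" "a > 0"
  shows "eventually (\<lambda>s. 1 \<le> s \<and> C * s powr (-\<sigma>) \<le> 1 \<and> M \<le> s powr (1/2) \<and> s powr (-a) < \<eta>) at_top"
proof -
  have "((\<lambda>s::real. C * s powr (-\<sigma>)) \<longlongrightarrow> 0) at_top" using assms by real_asymp
  then have 1: "eventually (\<lambda>s. C * s powr (-\<sigma>) < 1) at_top" by (rule order_tendstoD) simp
  have "filterlim (\<lambda>s::real. s powr (1/2)) at_top at_top" by real_asymp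
  then have 2: "eventually (\<lambda>s. M \<le> s powr (1/2)) at_top" by (simp add: filterlim_at_top)
  have "((\<lambda>s::real. s powr (-a)) \<longlongrightarrow> 0) at_top" using assms by real_asymp
  then have 3: "eventually (\<lambda>s. s powr (-a) < \<eta>) at_top" by (rule order_tendstoD) (use assms in simp)
  have 4: "eventually (\<lambda>s::real. 1 \<le> s) at_top" by (rule eventually_ge_at_top)
  show ?thesis using 1 2 3 4 by eventually_elim auto
qed



lemma ball_int_scale:
  fixes f :: "'a::euclidean_space \<Rightarrow> real"
  assumes [measurable]: "f \<in> borel_measurable borel" and t: "t \<ge> 0"
  shows "(\<integral>\<^sup>+u. indicator (ball 0 1) u * ennreal (t * f u) \<partial>lborel) = ennreal t * (\<integral>\<^sup>+u. indicator (ball 0 1) u * ennreal (f u) \<partial>lborel)"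
proof -
  have "(\<integral>\<^sup>+u. indicator (ball 0 1) u * ennreal (t * f u) \<partial>lborel) = (\<integral>\<^sup>+u. ennreal t * (indicator (ball 0 1) u * ennreal (f u)) \<partial>lborel)"
    using t by (intro nn_integral_cong) (simp add: ennreal_mult' mult_ac)
  also have "\<dots> = ennreal t * (\<integral>\<^sup>+u. indicator (ball 0 1) u * ennreal (f u) \<partial>lborel)"
    by (rule nn_integral_cmult) measurable
  finally show ?thesis .
qed

lemma ball_int_add:
  fixes f :: "'a::euclidean_space \<Rightarrow> real"
  assumes [measurable]: "f \<in> borel_measurable borel" and f: "\<And>u. f u \<ge> 0" and c: "c \<ge> 0"
  shows "(\<integral>\<^sup>+u. indicator (ball 0 1) u * ennreal (f u + c) \<partial>lborel) = (\<integral>\<^sup>+u. indicator (ball 0 1) u * ennreal (f u) \<partial>lborel) + ennreal c * emeasure lborel (ball (0::'a) 1)"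
proof -
  have "(\<integral>\<^sup>+u. indicator (ball 0 1) u * ennreal (f u + c) \<partial>lborel) = (\<integral>\<^sup>+u. indicator (ball 0 1) u * ennreal (f u) + ennreal c * indicator (ball (0::'a) 1) u \<partial>lborel)"
    using f c by (intro nn_integral_cong) (simp add: ennreal_plus distrib_left mult_ac)
  also have "\<dots> = (\<integral>\<^sup>+u. indicator (ball 0 1) u * ennreal (f u) \<partial>lborel) + (\<integral>\<^sup>+u. ennreal c * indicator (ball (0::'a) 1) u \<partial>lborel)"
    by (rule nn_integral_add[of "\<lambda>u. indicator (ball 0 1) u * ennreal (f u)" lborel "\<lambda>u. ennreal c * indicator (ball 0 1) u"]) auto
  also have "(\<integral>\<^sup>+u. ennreal c * indicator (ball (0::'a) 1) u \<partial>lborel) = ennreal c * emeasure lborel (ball (0::'a) 1)"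
    by (subst nn_integral_cmult) auto
  finally show ?thesis .
qed

lemma powr_pow_root:
  fixes X q :: real
  assumes "X \<ge> 0" "q > 0" "N \<ge> 1"
  shows "(X powr (1/q)) ^ N = X powr (real N / q)"
proof (cases "X = 0")
  case True then show ?thesis using assms by (simp add: zero_power)
next
  case False
  then have "X > 0" using assms by simp
  then have "(X powr (1/q)) ^ N = (X powr (1/q)) powr real N" by (simp add: powr_realpow)
  also have "\<dots> = X powr (real N / q)" by (simp add: powr_powr)
  finally show ?thesis .
qed

lemma small_s1:
  fixes s s1 e :: real
  assumes "0 < s" "s \<le> s1" "e \<ge> 0"
  shows "1 \<le> s1 powr e * s powr (-e)"
proof -
  have "s powr e \<le> s1 powr e" using assms by (intro powr_mono2) auto
  then have "s powr e * s powr (-e) \<le> s1 powr e * s powr (-e)" by (intro mult_right_mono) auto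
  moreover have "s powr e * s powr (-e) = 1" using assms by (simp add: powr_add[symmetric])
  ultimately show ?thesis by simp
qed

lemma small_s2:
  fixes s s1 p \<sigma> :: real
  assumes "0 < s" "s \<le> s1" "\<sigma> \<ge> 0"
  shows "s powr (-p) \<le> s1 powr \<sigma> * s powr (-p - \<sigma>)"
proof -
  have "s powr (-p) = s powr \<sigma> * s powr (-p - \<sigma>)" by (simp add: powr_add[symmetric])
  also have "\<dots> \<le> s1 powr \<sigma> * s powr (-p - \<sigma>)"
    using assms by (intro mult_right_mono powr_mono2) auto
  finally show ?thesis .
qed



theorem lemma9:
  fixes \<Omega> :: "'a::euclidean_space set"
    and K :: "'a \<Rightarrow> 'a \<Rightarrow> ereal"
    and g :: "'a \<Rightarrow> 'a \<Rightarrow> real"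
    and d p p' \<epsilon> :: real
    and A :: ennreal
  assumes "open \<Omega>" and "bounded \<Omega>"
    and "0 < d" and "d < real DIM('a)"
    and "p = real DIM('a) / d"
    and "1 / p + 1 / p' = 1"
    and "(\<lambda>z. K (fst z) (snd z)) \<in> borel_measurable (restrict_space borel (\<Omega> \<times> \<Omega>))"
    and "(\<lambda>z. g (fst z) (snd z)) \<in> borel_measurable (restrict_space borel (\<Omega> \<times> sphere 0 1))"
    and "\<exists>B. \<forall>x\<in>\<Omega>. \<forall>\<omega>\<in>sphere 0 1. \<bar>g x \<omega>\<bar> \<le> B"
    and "0 < \<epsilon>"
    and "\<exists>C''. \<forall>x\<in>\<Omega>. \<forall>y\<in>\<Omega>. x \<noteq> y \<longrightarrow>
           (\<exists>r. K x y = ereal (g x ((y - x) /\<^sub>R norm (y - x)) * norm (x - y) powr (d - real DIM('a)) + r)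
                \<and> \<bar>r\<bar> \<le> C'' * norm (x - y) powr (d - real DIM('a) + \<epsilon>))"
    and "A = (SUP x\<in>\<Omega>. \<integral>\<^sup>+ \<omega>. ennreal (\<bar>g x \<omega>\<bar> powr p') \<partial>sphere_measure) / of_nat DIM('a)"
  shows "(\<exists>\<sigma>>0. \<exists>C'. \<forall>s>0.
            (SUP x\<in>\<Omega>. emeasure lebesgue {y\<in>\<Omega>. \<bar>K x y\<bar> > ereal s})
              \<le> A * ennreal (s powr (- p')) + ennreal (C' * s powr (- p' - \<sigma>))
          \<and> ((\<exists>x0\<in>\<Omega>. (\<integral>\<^sup>+ \<omega>. ennreal (\<bar>g x0 \<omega>\<bar> powr p') \<partial>sphere_measure)
                      = (SUP x\<in>\<Omega>. \<integral>\<^sup>+ \<omega>. ennreal (\<bar>g x \<omega>\<bar> powr p') \<partial>sphere_measure))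
              \<longrightarrow> A * ennreal (s powr (- p'))
                    \<le> (SUP x\<in>\<Omega>. emeasure lebesgue {y\<in>\<Omega>. \<bar>K x y\<bar> > ereal s})
                      + ennreal (C' * s powr (- p' - \<sigma>))))
       \<and> (\<exists>C. \<forall>s>0. (SUP y\<in>\<Omega>. emeasure lebesgue {x\<in>\<Omega>. \<bar>K x y\<bar> > ereal s})
                      \<le> ennreal (C * s powr (- p')))"
proof -
  note K_meas = assms(7) and g_meas = assms(8)
  define n where "n = real DIM('a)"
  define q where "q = n - d"
  have n1: "n \<ge> 1" by (simp add: n_def DIM_positive Suc_leI)
  have q: "q > 0" using assms(4) by (simp add: q_def n_def)
  have dq: "d - real DIM('a) = - q" by (simp add: q_def n_def)
  have p'eq: "p' = n / q"
  proof -
    have "1 / p = d / n" using assms(5) by (simp add: n_def)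
    then have "d / n + 1 / p' = 1" using assms(6) by simp
    then have h: "1 / p' = q / n" using n1 by (simp add: q_def field_simps)
    have "p' = 1 / (1 / p')" by simp
    also have "\<dots> = n / q" unfolding h by simp
    finally show ?thesis .
  qed
  have p'1: "p' \<ge> 1" using q assms(3) n1 by (simp add: p'eq q_def field_simps)
  obtain B0 where B0: "\<forall>x\<in>\<Omega>. \<forall>\<omega>\<in>sphere 0 1. \<bar>g x \<omega>\<bar> \<le> B0" using assms(9) by blast
  define B where "B = \<bar>B0\<bar> + 1"
  have B: "B > 0" "\<And>x \<omega>. x \<in> \<Omega> \<Longrightarrow> \<omega> \<in> sphere 0 1 \<Longrightarrow> \<bar>g x \<omega>\<bar> \<le> B"
  proof -
    show "B > 0" by (simp add: B_def)
    fix x \<omega> assume "x \<in> \<Omega>" "\<omega> \<in> sphere (0::'a) 1"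
    then have "\<bar>g x \<omega>\<bar> \<le> B0" using B0 by blast
    then show "\<bar>g x \<omega>\<bar> \<le> B" unfolding B_def by linarith
  qed
  obtain C0 where C0: "\<forall>x\<in>\<Omega>. \<forall>y\<in>\<Omega>. x \<noteq> y \<longrightarrow>
           (\<exists>r. K x y = ereal (g x ((y - x) /\<^sub>R norm (y - x)) * norm (x - y) powr (d - real DIM('a)) + r)
                \<and> \<bar>r\<bar> \<le> C0 * norm (x - y) powr (d - real DIM('a) + \<epsilon>))" using assms(11) by blast
  define C where "C = \<bar>C0\<bar>"
  have C: "C \<ge> 0" by (simp add: C_def)
  have Krep: "\<exists>rr. K x y = ereal (g x (sgn (y - x)) * norm (y - x) powr (-q) + rr)
                \<and> \<bar>rr\<bar> \<le> C * norm (y - x) powr (-q + \<epsilon>)"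
    if xy: "x \<in> \<Omega>" "y \<in> \<Omega>" "x \<noteq> y" for x y
  proof -
    obtain rr where rr: "K x y = ereal (g x ((y - x) /\<^sub>R norm (y - x)) * norm (x - y) powr (d - real DIM('a)) + rr)"
       "\<bar>rr\<bar> \<le> C0 * norm (x - y) powr (d - real DIM('a) + \<epsilon>)" using C0 xy by blast
    have "C0 * norm (x - y) powr (d - real DIM('a) + \<epsilon>) \<le> C * norm (x - y) powr (d - real DIM('a) + \<epsilon>)"
      unfolding C_def by (intro mult_right_mono) auto
    then show ?thesis using rr by (intro exI[of _ rr]) (simp add: sgn_div_norm dq norm_minus_commute)
  qed
  obtain D where D: "D > 0" "\<And>x y. x \<in> \<Omega> \<Longrightarrow> y \<in> \<Omega> \<Longrightarrow> norm (y - x) \<le> D"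
  proof -
    obtain b where b: "b > 0" "\<forall>x\<in>\<Omega>. norm x \<le> b" using assms(2) bounded_pos by blast
    have "norm (y - x) \<le> 2 * b" if "x \<in> \<Omega>" "y \<in> \<Omega>" for x y
    proof -
      have "norm y \<le> b" "norm x \<le> b" using b that by auto
      then show ?thesis using norm_triangle_ineq4[of y x] by linarith
    qed
    then show ?thesis using b that[of "2*b"] by auto
  qed
  define gh where "gh x \<omega> = (if \<omega> \<in> sphere 0 1 then g x \<omega> else 0)" for x \<omega>
  have gh_meas[measurable]: "gh x \<in> borel_measurable borel" if x: "x \<in> \<Omega>" for x
  proof -
    have "(\<lambda>\<omega>. (x, \<omega>)) \<in> restrict_space borel (sphere 0 1) \<rightarrow>\<^sub>M restrict_space borel (\<Omega> \<times> sphere 0 1)"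
      by (rule measurable_restrict_space2)
         (auto simp: x space_restrict_space intro!: measurable_restrict_space1 borel_measurable_continuous_onI continuous_intros)
    from measurable_comp[OF this g_meas]
    have "(\<lambda>\<omega>. g x \<omega>) \<in> borel_measurable (restrict_space borel (sphere 0 1))" by (simp add: comp_def)
    then show ?thesis unfolding gh_def
      by (subst (asm) measurable_restrict_space_iff) auto
  qed
  have ghB: "\<bar>gh x \<omega>\<bar> \<le> B" if "x \<in> \<Omega>" for x \<omega>
    using B that by (auto simp: gh_def)
  have K_slice: "{y\<in>\<Omega>. \<bar>K x y\<bar> > ereal s} \<in> sets lebesgue" if x: "x \<in> \<Omega>" for x s
  proof -
    have "(\<lambda>y. (x, y)) \<in> restrict_space borel \<Omega> \<rightarrow>\<^sub>M restrict_space borel (\<Omega> \<times> \<Omega>)"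
      by (rule measurable_restrict_space2)
         (auto simp: x space_restrict_space intro!: measurable_restrict_space1 borel_measurable_continuous_onI continuous_intros)
    from measurable_comp[OF this K_meas]
    have [measurable]: "(\<lambda>y. K x y) \<in> borel_measurable (restrict_space borel \<Omega>)" by (simp add: comp_def)
    have "{y \<in> space (restrict_space borel \<Omega>). \<bar>K x y\<bar> > ereal s} \<in> sets (restrict_space borel \<Omega>)"
      by measurable
    then have "{y\<in>\<Omega>. \<bar>K x y\<bar> > ereal s} \<in> sets borel"
      using assms(1) by (simp add: sets_restrict_space_iff)
    then show ?thesis by simp
  qed
  define I where "I x = (\<integral>\<^sup>+u. indicator (ball (0::'a) 1) u * ennreal (\<bar>gh x (sgn u)\<bar> powr p') \<partial>lborel)" for x
  have sp: "space (sphere_measure :: 'a measure) = sphere 0 1"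
    by (simp add: sphere_measure_def space_restrict_space space_scale_measure)
  have val: "(\<integral>\<^sup>+\<omega>. ennreal (\<bar>g x \<omega>\<bar> powr p') \<partial>sphere_measure) = ennreal n * I x" if x: "x \<in> \<Omega>" for x
  proof -
    have "(\<integral>\<^sup>+\<omega>. ennreal (\<bar>g x \<omega>\<bar> powr p') \<partial>sphere_measure) = (\<integral>\<^sup>+\<omega>. ennreal (\<bar>gh x \<omega>\<bar> powr p') \<partial>sphere_measure)"
      by (rule nn_integral_cong) (simp add: sp gh_def)
    also have "\<dots> = ennreal n * I x"
      unfolding I_def n_def by (rule sphere_integral) (use x in measurable)
    finally show ?thesis .
  qed
  define V where "V = measure lborel (ball (0::'a) 1)"
  have EV: "emeasure lborel (ball (0::'a) 1) = ennreal V"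
    unfolding V_def using emeasure_lborel_ball_finite[of "0::'a" 1] by (intro emeasure_eq_ennreal_measure) (simp add: less_top)
  have V0: "V \<ge> 0" by (simp add: V_def)
  have Ibound: "I x \<le> ennreal (B powr p' * V)" if x: "x \<in> \<Omega>" for x
  proof -
    have "I x \<le> (\<integral>\<^sup>+u. indicator (ball (0::'a) 1) u * ennreal (B powr p') \<partial>lborel)"
      unfolding I_def
    proof (intro nn_integral_mono mult_left_mono ennreal_leI)
      fix u show "\<bar>gh x (sgn u)\<bar> powr p' \<le> B powr p'"
        using ghB[OF x] p'1 by (intro powr_mono2) auto
    qed auto
    also have "\<dots> = ennreal (B powr p') * emeasure lborel (ball (0::'a) 1)"
      by (subst nn_integral_cmult_indicator[symmetric]) (auto simp: mult_ac)
    also have "\<dots> = ennreal (B powr p' * V)" using V0 by (simp add: EV ennreal_mult)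
    finally show ?thesis .
  qed
  have A_eq: "A = (SUP x\<in>\<Omega>. I x)"
  proof -
    have "(SUP x\<in>\<Omega>. \<integral>\<^sup>+ \<omega>. ennreal (\<bar>g x \<omega>\<bar> powr p') \<partial>sphere_measure) = (SUP x\<in>\<Omega>. ennreal n * I x)"
      by (rule SUP_cong) (simp_all add: val)
    also have "\<dots> = ennreal n * (SUP x\<in>\<Omega>. I x)" by (simp add: SUP_mult_left_ennreal)
    finally have "A = ennreal n * (SUP x\<in>\<Omega>. I x) / ennreal n"
      using assms(12) by (simp add: n_def ennreal_of_nat_eq_real_of_nat)
    then show ?thesis using n1 by (simp add: mult.commute[of "ennreal n"] mult_divide_eq_ennreal)
  qed
  have Abound: "A \<le> ennreal (B powr p' * V)"
    unfolding A_eq by (rule SUP_least) (rule Ibound)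
  define \<sigma> where "\<sigma> = \<epsilon> / (2*q)"
  define L where "L = p' * (B + 1) powr (p' - 1)"
  define M where "M = B + C * D powr \<epsilon>"
  have \<sigma>: "\<sigma> > 0" using q assms(10) by (simp add: \<sigma>_def)
  have L0: "L \<ge> 0" using p'1 by (simp add: L_def)
  have Np: "real DIM('a) / q = p'" by (simp add: p'eq n_def)
  have N1: "DIM('a) \<ge> 1" by (simp add: DIM_positive Suc_leI)
  have upper: "emeasure lebesgue {y\<in>\<Omega>. \<bar>K x y\<bar> > ereal s}
      \<le> ennreal (s powr (-p')) * I x + ennreal (L * V * C * s powr (-p' - \<sigma>))"
    if x: "x \<in> \<Omega>" and s: "s \<ge> 1" "C * s powr (-\<sigma>) \<le> 1" "M \<le> s powr (1/2)" for x s
  proof -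
    have [measurable]: "gh x \<in> borel_measurable borel" using gh_meas[OF x] .
    define \<delta> where "\<delta> = C * s powr (-\<sigma>)"
    have \<delta>0: "\<delta> \<ge> 0" using C by (simp add: \<delta>_def)
    have \<delta>1: "\<delta> \<le> 1" using s by (simp add: \<delta>_def)
    define \<rho> where "\<rho> \<omega> = ((\<bar>gh x \<omega>\<bar> + \<delta>) / s) powr (1/q)" for \<omega>
    have \<rho>m[measurable]: "\<rho> \<in> borel_measurable borel" unfolding \<rho>_def by measurable
    have \<rho>0: "\<And>\<omega>. \<rho> \<omega> \<ge> 0" by (simp add: \<rho>_def)
    define S where "S = {y. y \<noteq> x \<and> norm (y - x) < \<rho> (sgn (y - x))}"
    have Sb: "S \<in> sets borel" unfolding S_def by (rule star_measure(1)[OF \<rho>m \<rho>0])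
    have sub: "{y\<in>\<Omega>. \<bar>K x y\<bar> > ereal s} \<subseteq> S \<union> {x}"
    proof (intro subsetI)
      fix y assume "y \<in> {y\<in>\<Omega>. \<bar>K x y\<bar> > ereal s}"
      then have y: "y \<in> \<Omega>" "\<bar>K x y\<bar> > ereal s" by auto
      show "y \<in> S \<union> {x}"
      proof (cases "y = x")
        case True then show ?thesis by simp
      next
        case False
        obtain rr where rr: "K x y = ereal (g x (sgn (y - x)) * norm (y - x) powr (-q) + rr)"
          "\<bar>rr\<bar> \<le> C * norm (y - x) powr (-q + \<epsilon>)" using Krep[OF x y(1)] False by metis
        define r where "r = norm (y - x)"
        define \<omega> where "\<omega> = sgn (y - x)"
        have r0: "r > 0" using False by (simp add: r_def)
        have rD: "r \<le> D" using D(2)[OF x y(1)] by (simp add: r_def)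
        have \<omega>s: "\<omega> \<in> sphere 0 1" using False by (simp add: \<omega>_def norm_sgn)
        have ghg: "gh x \<omega> = g x \<omega>" using \<omega>s by (simp add: gh_def)
        define v where "v = g x \<omega> * r powr (-q) + rr"
        have vs: "\<bar>v\<bar> > s" using y(2) rr(1) by (simp add: v_def r_def \<omega>_def)
        have "\<bar>v\<bar> \<le> \<bar>g x \<omega>\<bar> * r powr (-q) + C * r powr (-q + \<epsilon>)"
        proof -
          have "\<bar>v\<bar> \<le> \<bar>g x \<omega> * r powr (-q)\<bar> + \<bar>rr\<bar>" unfolding v_def by (rule abs_triangle_ineq)
          also have "\<bar>g x \<omega> * r powr (-q)\<bar> = \<bar>g x \<omega>\<bar> * r powr (-q)" by (simp add: abs_mult)
          finally show ?thesis using rr(2) by (simp add: r_def)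
        qed
        from up_core[OF q assms(10) r0 rD abs_ge_zero B(2)[OF x \<omega>s] C s(1) _ this vs] s(3)
        have "r < ((\<bar>g x \<omega>\<bar> + C * s powr (- (\<epsilon> / (2 * q)))) / s) powr (1 / q)"
          by (simp add: M_def)
        then have "r < \<rho> \<omega>" by (simp add: \<rho>_def ghg \<delta>_def \<sigma>_def)
        then show ?thesis using False by (simp add: S_def r_def \<omega>_def)
      qed
    qed
    have "emeasure lebesgue {y\<in>\<Omega>. \<bar>K x y\<bar> > ereal s} \<le> emeasure lebesgue (S \<union> {x})"
    proof (rule emeasure_mono[OF sub])
      have "S \<union> {x} \<in> sets borel" by (rule sets.Un[OF Sb]) simp
      then show "S \<union> {x} \<in> sets lebesgue" by (intro sets_completionI_sets) simp
    qed
    also have "\<dots> = emeasure lborel (S \<union> {x})"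
    proof -
      have "S \<union> {x} \<in> sets borel" by (rule sets.Un[OF Sb]) simp
      then have "S \<union> {x} \<in> sets lborel" by simp
      then show ?thesis by simp
    qed
    also have "\<dots> \<le> emeasure lborel S + emeasure lborel {x}"
      by (rule emeasure_subadditive) (auto simp: Sb)
    also have "\<dots> = emeasure lborel S" by simp
    also have "\<dots> = (\<integral>\<^sup>+u. indicator (ball (0::'a) 1) u * ennreal (\<rho> (sgn u) ^ DIM('a)) \<partial>lborel)"
      unfolding S_def by (rule star_measure(2)[OF \<rho>m \<rho>0])
    also have "\<dots> \<le> (\<integral>\<^sup>+u. indicator (ball (0::'a) 1) u * ennreal (s powr (-p') * \<bar>gh x (sgn u)\<bar> powr p' + s powr (-p') * (L * \<delta>)) \<partial>lborel)"
    proof (intro nn_integral_mono mult_left_mono ennreal_leI)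
      fix u :: 'a
      define a where "a = \<bar>gh x (sgn u)\<bar>"
      have a: "0 \<le> a" "a \<le> B" using ghB[OF x] by (auto simp: a_def)
      have "\<rho> (sgn u) ^ DIM('a) = ((a + \<delta>) / s) powr p'"
        unfolding \<rho>_def a_def[symmetric] using \<delta>0 a q N1 s
        by (subst powr_pow_root) (auto simp: Np)
      also have "\<dots> = s powr (-p') * (a + \<delta>) powr p'"
        using s a \<delta>0 by (simp add: powr_divide powr_minus_divide)
      also have "\<dots> \<le> s powr (-p') * (a powr p' + L * \<delta>)"
        using powr_incr_bound[OF a \<delta>0 \<delta>1 p'1] by (intro mult_left_mono) (auto simp: L_def mult_ac)
      finally show "\<rho> (sgn u) ^ DIM('a) \<le> s powr (-p') * \<bar>gh x (sgn u)\<bar> powr p' + s powr (-p') * (L * \<delta>)"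
        by (simp add: a_def distrib_left)
    qed auto
    also have "\<dots> = (\<integral>\<^sup>+u. indicator (ball (0::'a) 1) u * ennreal (s powr (-p') * \<bar>gh x (sgn u)\<bar> powr p') \<partial>lborel)
        + ennreal (s powr (-p') * (L * \<delta>)) * emeasure lborel (ball (0::'a) 1)"
      by (rule ball_int_add) (use L0 \<delta>0 in auto)
    also have "(\<integral>\<^sup>+u. indicator (ball (0::'a) 1) u * ennreal (s powr (-p') * \<bar>gh x (sgn u)\<bar> powr p') \<partial>lborel)
        = ennreal (s powr (-p')) * I x"
      unfolding I_def by (rule ball_int_scale) auto
    also have "ennreal (s powr (-p') * (L * \<delta>)) * emeasure lborel (ball (0::'a) 1) = ennreal (L * V * C * s powr (-p' - \<sigma>))"
    proof -
      have eqv: "s powr (-p') * (L * \<delta>) * V = L * V * C * s powr (-p' - \<sigma>)"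
      proof -
        have "s powr (-p') * s powr (-\<sigma>) = s powr (-p' - \<sigma>)" by (simp add: powr_add[symmetric])
        then show ?thesis by (simp add: \<delta>_def mult_ac)
      qed
      moreover have "ennreal (s powr (-p') * (L * \<delta>)) * ennreal V = ennreal (s powr (-p') * (L * \<delta>) * V)"
        using L0 \<delta>0 V0 by (intro ennreal_mult[symmetric]) auto
      ultimately show ?thesis unfolding EV eqv by simp
    qed
    finally show ?thesis .
  qed
  have lower: "ennreal (s powr (-p')) * I x0
      \<le> emeasure lebesgue {y\<in>\<Omega>. \<bar>K x0 y\<bar> > ereal s} + ennreal (L * V * C * s powr (-p' - \<sigma>))"
    if x0: "x0 \<in> \<Omega>" and \<eta>: "ball x0 \<eta> \<subseteq> \<Omega>" and s: "s \<ge> 1" "C * s powr (-\<sigma>) \<le> 1" "M \<le> s powr (1/2)"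
      "s powr (-(1/(2*q))) < \<eta>" for x0 \<eta> s
  proof -
    have [measurable]: "gh x0 \<in> borel_measurable borel" using gh_meas[OF x0] .
    define \<delta> where "\<delta> = C * s powr (-\<sigma>)"
    have \<delta>0: "\<delta> \<ge> 0" using C by (simp add: \<delta>_def)
    have \<delta>1: "\<delta> \<le> 1" using s by (simp add: \<delta>_def)
    define m where "m \<omega> = max (\<bar>gh x0 \<omega>\<bar> - \<delta>) 0" for \<omega>
    have [measurable]: "m \<in> borel_measurable borel" unfolding m_def by measurable
    define \<rho> where "\<rho> \<omega> = (m \<omega> / s) powr (1/q)" for \<omega>
    have \<rho>m[measurable]: "\<rho> \<in> borel_measurable borel" unfolding \<rho>_def by measurable
    have \<rho>0: "\<And>\<omega>. \<rho> \<omega> \<ge> 0" by (simp add: \<rho>_def)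
    define S where "S = {y. y \<noteq> x0 \<and> norm (y - x0) < \<rho> (sgn (y - x0))}"
    have Sb: "S \<in> sets borel" unfolding S_def by (rule star_measure(1)[OF \<rho>m \<rho>0])
    have BM: "B \<le> s powr (1/2)"
    proof -
      have "0 \<le> C * D powr \<epsilon>" using C by simp
      then show ?thesis using s(3) by (simp add: M_def)
    qed
    have sub: "S \<subseteq> {y\<in>\<Omega>. \<bar>K x0 y\<bar> > ereal s}"
    proof (intro subsetI)
      fix y assume "y \<in> S"
      then have yx: "y \<noteq> x0" and yl: "norm (y - x0) < \<rho> (sgn (y - x0))" by (auto simp: S_def)
      define r where "r = norm (y - x0)"
      define \<omega> where "\<omega> = sgn (y - x0)"
      have r0: "r > 0" using yx by (simp add: r_def)
      have \<omega>s: "\<omega> \<in> sphere 0 1" using yx by (simp add: \<omega>_def norm_sgn)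
      have ghg: "gh x0 \<omega> = g x0 \<omega>" using \<omega>s by (simp add: gh_def)
      have rl: "r < (max (\<bar>g x0 \<omega>\<bar> - C * s powr (- (\<epsilon> / (2 * q)))) 0 / s) powr (1 / q)"
        using yl by (simp add: r_def \<omega>_def[symmetric] \<rho>_def m_def ghg \<delta>_def \<sigma>_def)
      note lc = low_core[OF q assms(10) r0 abs_ge_zero B(2)[OF x0 \<omega>s] C s(1) BM rl]
      have "dist x0 y < \<eta>" using lc(1) s(4) by (simp add: dist_norm norm_minus_commute r_def)
      then have yO: "y \<in> \<Omega>" using \<eta> by auto
      obtain rr where rr: "K x0 y = ereal (g x0 (sgn (y - x0)) * norm (y - x0) powr (-q) + rr)"
        "\<bar>rr\<bar> \<le> C * norm (y - x0) powr (-q + \<epsilon>)" using Krep[OF x0 yO] yx by metis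
      define v where "v = g x0 \<omega> * r powr (-q) + rr"
      have "\<bar>g x0 \<omega>\<bar> * r powr (-q) - C * r powr (-q + \<epsilon>) \<le> \<bar>v\<bar>"
      proof -
        have "\<bar>g x0 \<omega> * r powr (-q)\<bar> - \<bar>rr\<bar> \<le> \<bar>v\<bar>" unfolding v_def by linarith
        moreover have "\<bar>g x0 \<omega> * r powr (-q)\<bar> = \<bar>g x0 \<omega>\<bar> * r powr (-q)" by (simp add: abs_mult)
        ultimately show ?thesis using rr(2) by (simp add: r_def)
      qed
      then have "\<bar>v\<bar> > s" using lc(2) by linarith
      then have "\<bar>K x0 y\<bar> > ereal s" using rr(1) by (simp add: v_def r_def \<omega>_def)
      then show "y \<in> {y\<in>\<Omega>. \<bar>K x0 y\<bar> > ereal s}" using yO by simp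
    qed
    have "ennreal (s powr (-p')) * I x0 = (\<integral>\<^sup>+u. indicator (ball (0::'a) 1) u * ennreal (s powr (-p') * \<bar>gh x0 (sgn u)\<bar> powr p') \<partial>lborel)"
      unfolding I_def by (rule ball_int_scale[symmetric]) auto
    also have "\<dots> \<le> (\<integral>\<^sup>+u. indicator (ball (0::'a) 1) u * ennreal (s powr (-p') * m (sgn u) powr p' + s powr (-p') * (L * \<delta>)) \<partial>lborel)"
    proof (intro nn_integral_mono mult_left_mono ennreal_leI)
      fix u :: 'a
      define a where "a = m (sgn u)"
      have a: "0 \<le> a" "a \<le> B" using ghB[OF x0, of "sgn u"] \<delta>0 by (auto simp: a_def m_def)
      have "\<bar>gh x0 (sgn u)\<bar> powr p' \<le> (a + \<delta>) powr p'"
        using p'1 by (intro powr_mono2) (auto simp: a_def m_def)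
      also have "\<dots> \<le> a powr p' + L * \<delta>"
        using powr_incr_bound[OF a \<delta>0 \<delta>1 p'1] by (simp add: L_def mult_ac)
      finally have "s powr (-p') * \<bar>gh x0 (sgn u)\<bar> powr p' \<le> s powr (-p') * (a powr p' + L * \<delta>)"
        by (intro mult_left_mono) auto
      then show "s powr (-p') * \<bar>gh x0 (sgn u)\<bar> powr p' \<le> s powr (-p') * m (sgn u) powr p' + s powr (-p') * (L * \<delta>)"
        by (simp add: a_def distrib_left)
    qed auto
    also have "\<dots> = (\<integral>\<^sup>+u. indicator (ball (0::'a) 1) u * ennreal (s powr (-p') * m (sgn u) powr p') \<partial>lborel)
        + ennreal (s powr (-p') * (L * \<delta>)) * emeasure lborel (ball (0::'a) 1)"
      by (rule ball_int_add) (use L0 \<delta>0 in auto)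
    also have "(\<integral>\<^sup>+u. indicator (ball (0::'a) 1) u * ennreal (s powr (-p') * m (sgn u) powr p') \<partial>lborel)
        = (\<integral>\<^sup>+u. indicator (ball (0::'a) 1) u * ennreal (\<rho> (sgn u) ^ DIM('a)) \<partial>lborel)"
    proof (rule nn_integral_cong)
      fix u :: 'a
      have m0: "m (sgn u) \<ge> 0" by (simp add: m_def)
      have "\<rho> (sgn u) ^ DIM('a) = (m (sgn u) / s) powr p'"
        unfolding \<rho>_def using m0 q N1 s by (subst powr_pow_root) (auto simp: Np)
      also have "\<dots> = s powr (-p') * m (sgn u) powr p'"
        using s m0 by (simp add: powr_divide powr_minus_divide)
      finally show "indicator (ball (0::'a) 1) u * ennreal (s powr (-p') * m (sgn u) powr p') = indicator (ball (0::'a) 1) u * ennreal (\<rho> (sgn u) ^ DIM('a))"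
        by simp
    qed
    also have "\<dots> = emeasure lborel S"
      unfolding S_def by (rule star_measure(2)[OF \<rho>m \<rho>0, symmetric])
    also have "\<dots> = emeasure lebesgue S" using Sb by simp
    also have "\<dots> \<le> emeasure lebesgue {y\<in>\<Omega>. \<bar>K x0 y\<bar> > ereal s}"
      by (rule emeasure_mono[OF sub K_slice[OF x0]])
    also have "ennreal (s powr (-p') * (L * \<delta>)) * emeasure lborel (ball (0::'a) 1) = ennreal (L * V * C * s powr (-p' - \<sigma>))"
    proof -
      have eqv: "s powr (-p') * (L * \<delta>) * V = L * V * C * s powr (-p' - \<sigma>)"
      proof -
        have "s powr (-p') * s powr (-\<sigma>) = s powr (-p' - \<sigma>)" by (simp add: powr_add[symmetric])
        then show ?thesis by (simp add: \<delta>_def mult_ac)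
      qed
      moreover have "ennreal (s powr (-p') * (L * \<delta>)) * ennreal V = ennreal (s powr (-p') * (L * \<delta>) * V)"
        using L0 \<delta>0 V0 by (intro ennreal_mult[symmetric]) auto
      ultimately show ?thesis unfolding EV eqv by simp
    qed
    finally show ?thesis by (simp add: add_right_mono)
  qed
  define M' where "M' = M powr p' * V"
  have third: "emeasure lebesgue {x\<in>\<Omega>. \<bar>K x y\<bar> > ereal s} \<le> ennreal (M' * s powr (-p'))"
    if y: "y \<in> \<Omega>" and s: "s > 0" for y s
  proof -
    define R where "R = (M / s) powr (1/q)"
    have M0: "M \<ge> 0" using B C by (simp add: M_def)
    have R0: "R \<ge> 0" by (simp add: R_def)
    define S where "S = {x. x \<noteq> y \<and> norm (x - y) < R}"
    have Sb: "S \<in> sets borel" using star_measure(1)[of "\<lambda>_. R" y] R0 by (simp add: S_def)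
    have Sm: "emeasure lborel S = (\<integral>\<^sup>+u. indicator (ball (0::'a) 1) u * ennreal (R ^ DIM('a)) \<partial>lborel)"
      using star_measure(2)[of "\<lambda>_. R" y] R0 by (simp add: S_def)
    have sub: "{x\<in>\<Omega>. \<bar>K x y\<bar> > ereal s} \<subseteq> S \<union> {y}"
    proof (intro subsetI)
      fix x assume "x \<in> {x\<in>\<Omega>. \<bar>K x y\<bar> > ereal s}"
      then have x: "x \<in> \<Omega>" "\<bar>K x y\<bar> > ereal s" by auto
      show "x \<in> S \<union> {y}"
      proof (cases "x = y")
        case True then show ?thesis by simp
      next
        case False
        obtain rr where rr: "K x y = ereal (g x (sgn (y - x)) * norm (y - x) powr (-q) + rr)"
          "\<bar>rr\<bar> \<le> C * norm (y - x) powr (-q + \<epsilon>)" using Krep[OF x(1) y] False by metis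
        define r where "r = norm (y - x)"
        define \<omega> where "\<omega> = sgn (y - x)"
        have r0: "r > 0" using False by (simp add: r_def)
        have rD: "r \<le> D" using D(2)[OF x(1) y] by (simp add: r_def)
        have \<omega>s: "\<omega> \<in> sphere 0 1" using False by (simp add: \<omega>_def norm_sgn)
        define v where "v = g x \<omega> * r powr (-q) + rr"
        have vs: "\<bar>v\<bar> > s" using x(2) rr(1) by (simp add: v_def r_def \<omega>_def)
        have "\<bar>v\<bar> \<le> B * r powr (-q) + C * r powr (-q + \<epsilon>)"
        proof -
          have "\<bar>v\<bar> \<le> \<bar>g x \<omega> * r powr (-q)\<bar> + \<bar>rr\<bar>" unfolding v_def by (rule abs_triangle_ineq)
          also have "\<bar>g x \<omega> * r powr (-q)\<bar> = \<bar>g x \<omega>\<bar> * r powr (-q)" by (simp add: abs_mult)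
          also have "\<dots> \<le> B * r powr (-q)" using B(2)[OF x(1) \<omega>s] by (intro mult_right_mono) auto
          finally show ?thesis using rr(2) by (simp add: r_def)
        qed
        from bound_core[OF q assms(10) r0 rD _ C s this vs] B
        have "r < R" by (simp add: R_def M_def)
        then show ?thesis using False by (simp add: S_def r_def norm_minus_commute)
      qed
    qed
    have Sx: "S \<union> {y} \<in> sets borel" by (rule sets.Un[OF Sb]) simp
    have "emeasure lebesgue {x\<in>\<Omega>. \<bar>K x y\<bar> > ereal s} \<le> emeasure lebesgue (S \<union> {y})"
      by (rule emeasure_mono[OF sub]) (use Sx in \<open>intro sets_completionI_sets, simp\<close>)
    also have "\<dots> = emeasure lborel (S \<union> {y})"
    proof -
      have "S \<union> {y} \<in> sets lborel" using Sx by simp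
      then show ?thesis by simp
    qed
    also have "\<dots> \<le> emeasure lborel S + emeasure lborel {y}"
      by (rule emeasure_subadditive) (auto simp: Sb)
    also have "\<dots> = ennreal (R ^ DIM('a)) * emeasure lborel (ball (0::'a) 1)"
      by (simp add: Sm nn_integral_cmult_indicator[symmetric] mult_ac)
    also have "\<dots> = ennreal (M' * s powr (-p'))"
    proof -
      have "R ^ DIM('a) = (M / s) powr p'"
        unfolding R_def using M0 q N1 s by (subst powr_pow_root) (auto simp: Np)
      also have "\<dots> = M powr p' * s powr (-p')"
        using s M0 by (simp add: powr_divide powr_minus_divide)
      finally have "R ^ DIM('a) * V = M' * s powr (-p')" by (simp add: M'_def mult_ac)
      moreover have "ennreal (R ^ DIM('a)) * ennreal V = ennreal (R ^ DIM('a) * V)"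
        using R0 V0 by (intro ennreal_mult[symmetric]) auto
      ultimately show ?thesis by (simp add: EV)
    qed
    finally show ?thesis .
  qed
  define val where "val x = (\<integral>\<^sup>+ \<omega>. ennreal (\<bar>g x \<omega>\<bar> powr p') \<partial>sphere_measure)" for x
  define att where "att \<longleftrightarrow> (\<exists>x0\<in>\<Omega>. val x0 = (SUP x\<in>\<Omega>. val x))"
  obtain x0 \<eta> where \<eta>: "\<eta> > 0" and x0: "att \<Longrightarrow> x0 \<in> \<Omega> \<and> val x0 = (SUP x\<in>\<Omega>. val x) \<and> ball x0 \<eta> \<subseteq> \<Omega>"
  proof (cases att)
    case True
    then obtain x0 where x0: "x0 \<in> \<Omega>" "val x0 = (SUP x\<in>\<Omega>. val x)" unfolding att_def by blast
    obtain \<eta> where "\<eta> > 0" "ball x0 \<eta> \<subseteq> \<Omega>" using assms(1) x0(1) open_contains_ball by blast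
    then show ?thesis using that x0 by blast
  next
    case False
    show ?thesis by (rule that[of 1]) (use False in auto)
  qed
  have "1/(2*q) > 0" using q by simp
  from ev_thresh[OF \<sigma> \<eta> this, of C M]
  obtain s0 where s0: "\<And>s. s \<ge> s0 \<Longrightarrow> 1 \<le> s \<and> C * s powr (-\<sigma>) \<le> 1 \<and> M \<le> s powr (1/2) \<and> s powr (-(1/(2*q))) < \<eta>"
    unfolding eventually_at_top_linorder by blast
  define s1 where "s1 = max s0 1"
  have s1: "s1 \<ge> 1" "s1 \<ge> s0" by (auto simp: s1_def)
  obtain b where b: "b > 0" "\<forall>x\<in>\<Omega>. norm x \<le> b" using assms(2) bounded_pos by blast
  have Osub: "\<Omega> \<subseteq> cball 0 b" using b by auto
  have Ob: "\<Omega> \<in> sets borel" using assms(1) by simp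
  define W where "W = measure lborel \<Omega>"
  have EW: "emeasure lborel \<Omega> = ennreal W"
  proof -
    have "emeasure lborel \<Omega> \<le> emeasure lborel (cball (0::'a) b)" by (rule emeasure_mono[OF Osub]) simp
    also have "\<dots> < top" using emeasure_lborel_cball_finite[of "0::'a" b] by simp
    finally show ?thesis unfolding W_def by (intro emeasure_eq_ennreal_measure) simp
  qed
  have W0: "W \<ge> 0" by (simp add: W_def)
  have slice_le_O: "emeasure lebesgue {y\<in>\<Omega>. \<bar>K x y\<bar> > ereal s} \<le> ennreal W" for x s
  proof -
    have "emeasure lebesgue {y\<in>\<Omega>. \<bar>K x y\<bar> > ereal s} \<le> emeasure lebesgue \<Omega>"
      by (rule emeasure_mono) (use Ob in auto)
    also have "\<dots> = ennreal W" using Ob EW by simp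
    finally show ?thesis .
  qed
  define C' where "C' = W * s1 powr (p' + \<sigma>) + B powr p' * V * s1 powr \<sigma> + L * V * C"
  have t1: "0 \<le> W * s1 powr (p' + \<sigma>)" using W0 by simp
  have t2: "0 \<le> B powr p' * V * s1 powr \<sigma>" using V0 by simp
  have t3: "0 \<le> L * V * C" using L0 V0 C by simp
  have Ix_le_A: "I x \<le> A" if "x \<in> \<Omega>" for x
    unfolding A_eq using that by (rule SUP_upper)
  have main: "(SUP x\<in>\<Omega>. emeasure lebesgue {y\<in>\<Omega>. \<bar>K x y\<bar> > ereal s})
              \<le> A * ennreal (s powr (- p')) + ennreal (C' * s powr (- p' - \<sigma>))
          \<and> (att \<longrightarrow> A * ennreal (s powr (- p'))
                    \<le> (SUP x\<in>\<Omega>. emeasure lebesgue {y\<in>\<Omega>. \<bar>K x y\<bar> > ereal s})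
                      + ennreal (C' * s powr (- p' - \<sigma>)))" if s: "s > 0" for s
  proof (cases "s \<ge> s1")
    case True
    then have ss: "1 \<le> s" "C * s powr (-\<sigma>) \<le> 1" "M \<le> s powr (1/2)" "s powr (-(1/(2*q))) < \<eta>"
      using s0[of s] s1 by auto
    have E: "ennreal (L * V * C * s powr (- p' - \<sigma>)) \<le> ennreal (C' * s powr (- p' - \<sigma>))"
      using t1 t2 by (intro ennreal_leI mult_right_mono) (auto simp: C'_def)
    show ?thesis
    proof (intro conjI impI)
      show "(SUP x\<in>\<Omega>. emeasure lebesgue {y\<in>\<Omega>. \<bar>K x y\<bar> > ereal s})
              \<le> A * ennreal (s powr (- p')) + ennreal (C' * s powr (- p' - \<sigma>))"
      proof (rule SUP_least)
        fix x assume x: "x \<in> \<Omega>"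
        have "emeasure lebesgue {y\<in>\<Omega>. \<bar>K x y\<bar> > ereal s}
            \<le> ennreal (s powr (-p')) * I x + ennreal (L * V * C * s powr (-p' - \<sigma>))"
          using upper[OF x ss(1-3)] .
        also have "\<dots> \<le> A * ennreal (s powr (- p')) + ennreal (C' * s powr (- p' - \<sigma>))"
        proof (rule add_mono[OF _ E])
          show "ennreal (s powr (-p')) * I x \<le> A * ennreal (s powr (- p'))"
            unfolding mult.commute[of "ennreal _"] by (rule mult_right_mono[OF Ix_le_A[OF x]]) simp
        qed
        finally show "emeasure lebesgue {y\<in>\<Omega>. \<bar>K x y\<bar> > ereal s} \<le> A * ennreal (s powr (- p')) + ennreal (C' * s powr (- p' - \<sigma>))" .
      qed
    next
      assume att
      with x0 have x0O: "x0 \<in> \<Omega>" and vx0: "val x0 = (SUP x\<in>\<Omega>. val x)" and bx0: "ball x0 \<eta> \<subseteq> \<Omega>" by auto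
      have "A = val x0 / of_nat DIM('a)" using assms(12) vx0 by (simp add: val_def)
      also have "\<dots> = I x0" using val[OF x0O] n1
        by (simp add: val_def n_def ennreal_of_nat_eq_real_of_nat mult.commute[of "ennreal _"] mult_divide_eq_ennreal)
      finally have AI: "A = I x0" .
      have "A * ennreal (s powr (- p')) = ennreal (s powr (-p')) * I x0" by (simp add: AI mult.commute)
      also have "\<dots> \<le> emeasure lebesgue {y\<in>\<Omega>. \<bar>K x0 y\<bar> > ereal s} + ennreal (L * V * C * s powr (-p' - \<sigma>))"
        by (rule lower[OF x0O bx0 ss])
      also have "\<dots> \<le> (SUP x\<in>\<Omega>. emeasure lebesgue {y\<in>\<Omega>. \<bar>K x y\<bar> > ereal s}) + ennreal (C' * s powr (- p' - \<sigma>))"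
        by (intro add_mono E SUP_upper x0O)
      finally show "A * ennreal (s powr (- p')) \<le> (SUP x\<in>\<Omega>. emeasure lebesgue {y\<in>\<Omega>. \<bar>K x y\<bar> > ereal s}) + ennreal (C' * s powr (- p' - \<sigma>))" .
    qed
  next
    case False
    then have ss1: "s \<le> s1" by simp
    show ?thesis
    proof (intro conjI impI)
      have "W \<le> C' * s powr (- p' - \<sigma>)"
      proof -
        have "W = W * 1" by simp
        also have "\<dots> \<le> W * (s1 powr (p' + \<sigma>) * s powr (-(p' + \<sigma>)))"
          using small_s1[OF s ss1, of "p' + \<sigma>"] p'1 \<sigma> W0 by (intro mult_left_mono) auto
        also have "\<dots> = W * s1 powr (p' + \<sigma>) * s powr (- p' - \<sigma>)" by (simp add: mult_ac)
        also have "\<dots> \<le> C' * s powr (- p' - \<sigma>)"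
          using t2 t3 by (intro mult_right_mono) (auto simp: C'_def)
        finally show ?thesis .
      qed
      then have "ennreal W \<le> ennreal (C' * s powr (- p' - \<sigma>))" by (rule ennreal_leI)
      then show "(SUP x\<in>\<Omega>. emeasure lebesgue {y\<in>\<Omega>. \<bar>K x y\<bar> > ereal s})
              \<le> A * ennreal (s powr (- p')) + ennreal (C' * s powr (- p' - \<sigma>))"
        using slice_le_O by (intro SUP_least order.trans[OF _ add_increasing]) (auto intro: order.trans)
    next
      have "A * ennreal (s powr (- p')) \<le> ennreal (B powr p' * V) * ennreal (s powr (- p'))"
        by (intro mult_right_mono Abound) auto
      also have "\<dots> = ennreal (B powr p' * V * s powr (- p'))" using V0 by (simp add: ennreal_mult)
      also have "\<dots> \<le> ennreal (C' * s powr (- p' - \<sigma>))"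
      proof (rule ennreal_leI)
        have "B powr p' * V * s powr (- p') \<le> B powr p' * V * (s1 powr \<sigma> * s powr (- p' - \<sigma>))"
          using small_s2[OF s ss1, of \<sigma> p'] \<sigma> V0 by (intro mult_left_mono) auto
        also have "\<dots> = B powr p' * V * s1 powr \<sigma> * s powr (- p' - \<sigma>)" by (simp add: mult_ac)
        also have "\<dots> \<le> C' * s powr (- p' - \<sigma>)"
          using t1 t3 by (intro mult_right_mono) (auto simp: C'_def)
        finally show "B powr p' * V * s powr (- p') \<le> C' * s powr (- p' - \<sigma>)" .
      qed
      also have "\<dots> \<le> (SUP x\<in>\<Omega>. emeasure lebesgue {y\<in>\<Omega>. \<bar>K x y\<bar> > ereal s}) + ennreal (C' * s powr (- p' - \<sigma>))"
        by (rule add_increasing) auto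
      finally show "A * ennreal (s powr (- p')) \<le> (SUP x\<in>\<Omega>. emeasure lebesgue {y\<in>\<Omega>. \<bar>K x y\<bar> > ereal s}) + ennreal (C' * s powr (- p' - \<sigma>))" .
    qed
  qed
  have part2: "\<exists>C. \<forall>s>0. (SUP y\<in>\<Omega>. emeasure lebesgue {x\<in>\<Omega>. \<bar>K x y\<bar> > ereal s}) \<le> ennreal (C * s powr (- p'))"
    by (intro exI[of _ M'] allI impI SUP_least third)
  have fin: "\<forall>s>0. (SUP x\<in>\<Omega>. emeasure lebesgue {y\<in>\<Omega>. \<bar>K x y\<bar> > ereal s})
              \<le> A * ennreal (s powr (- p')) + ennreal (C' * s powr (- p' - \<sigma>))
          \<and> ((\<exists>x0\<in>\<Omega>. (\<integral>\<^sup>+ \<omega>. ennreal (\<bar>g x0 \<omega>\<bar> powr p') \<partial>sphere_measure)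
                      = (SUP x\<in>\<Omega>. \<integral>\<^sup>+ \<omega>. ennreal (\<bar>g x \<omega>\<bar> powr p') \<partial>sphere_measure))
              \<longrightarrow> A * ennreal (s powr (- p'))
                    \<le> (SUP x\<in>\<Omega>. emeasure lebesgue {y\<in>\<Omega>. \<bar>K x y\<bar> > ereal s})
                      + ennreal (C' * s powr (- p' - \<sigma>)))"
    using main unfolding att_def val_def by blast
  show ?thesis using fin \<sigma> part2 by blast
qed


end
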